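(* Let $k,r\in\mathbb{N}$ and let $M_1,\dots,M_k$ be matchings (in a common undirected graph) with $\Delta\big(\bigcup_{i\in[k]}M_i\big)\leq r$. Suppose $e(M_i)>2(r^3+r)^2\ln k$ for all $i\in[k]$. Then there exists a matching $H\subseteq\bigcup_{i\in[k]}M_i$ with $|E(H)\cap M_i|\geq e(M_i)/(r^2+1)$ for all $i\in[k]$.
   Context: A matching is a set of edges no two of which share a vertex; $\Delta$ denotes maximum degree of the undirected graph formed by the union of the edge sets. *)

theory Defs
  imports Complex_Main
begin

text \<open>Undirected (simple) graphs are represented by their edge sets: an edge is a
  2-element vertex set.\<close>

definition is_edge_set :: "'a set set \<Rightarrow> bool" where
  "is_edge_set E \<longleftrightarrow> (\<forall>e\<in>E. card e = 2)"

definition matching :: "'a set set \<Rightarrow> bool" where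
  "matching M \<longleftrightarrow> finite M \<and> is_edge_set M \<and>
     (\<forall>e\<in>M. \<forall>f\<in>M. e \<noteq> f \<longrightarrow> e \<inter> f = {})"

definition degree :: "'a set set \<Rightarrow> 'a \<Rightarrow> nat" where
  "degree E v = card {e\<in>E. v \<in> e}"

definition max_degree_le :: "'a set set \<Rightarrow> nat \<Rightarrow> bool" where
  "max_degree_le E r \<longleftrightarrow> (\<forall>v. degree E v \<le> r)"

end

theory Submission
  imports Defs "HOL-Library.FuncSet"
begin

lemma sum_PiE_split:
  fixes f g :: "('v \<Rightarrow> 'b) \<Rightarrow> real"
  assumes fin: "finite B" "finite C" "finite A" and disj: "B \<inter> C = {}"
    and fB: "\<And>\<omega> \<omega>'. (\<And>x. x \<in> B \<Longrightarrow> \<omega> x = \<omega>' x) \<Longrightarrow> f \<omega> = f \<omega>'"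
    and gC: "\<And>\<omega> \<omega>'. (\<And>x. x \<in> C \<Longrightarrow> \<omega> x = \<omega>' x) \<Longrightarrow> g \<omega> = g \<omega>'"
  shows "(\<Sum>\<omega>\<in>PiE (B \<union> C) (\<lambda>_. A). f \<omega> * g \<omega>)
       = (\<Sum>\<omega>\<in>PiE B (\<lambda>_. A). f \<omega>) * (\<Sum>\<omega>\<in>PiE C (\<lambda>_. A). g \<omega>)"
proof -
  have "(\<Sum>\<omega>\<in>PiE B (\<lambda>_. A). f \<omega>) * (\<Sum>\<omega>\<in>PiE C (\<lambda>_. A). g \<omega>)
      = (\<Sum>(\<phi>,\<psi>)\<in>PiE B (\<lambda>_. A) \<times> PiE C (\<lambda>_. A). f \<phi> * g \<psi>)"
    by (simp add: sum_product sum.cartesian_product)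
  also have "\<dots> = (\<Sum>\<omega>\<in>PiE (B \<union> C) (\<lambda>_. A). f \<omega> * g \<omega>)"
  proof -
    have 1: "f (restrict \<omega> B) = f \<omega>" for \<omega> by (rule fB) auto
    have 2: "g (restrict \<omega> C) = g \<omega>" for \<omega> by (rule gC) auto
    have 3: "f (\<lambda>x. if x \<in> B then \<phi> x else \<psi> x) = f \<phi>" for \<phi> \<psi> by (rule fB) auto
    have 4: "\<psi> \<in> PiE C (\<lambda>_. A) \<Longrightarrow> g (\<lambda>x. if x \<in> B then \<phi> x else \<psi> x) = g \<psi>" for \<phi> \<psi>
      by (rule gC) (use disj in auto)
    show ?thesis
      apply (rule sum.reindex_bij_witness[of _ "\<lambda>\<omega>. (restrict \<omega> B, restrict \<omega> C)"
        "\<lambda>(\<phi>,\<psi>) x. if x \<in> B then \<phi> x else \<psi> x"])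
      subgoal for p
      proof -
        assume "p \<in> PiE B (\<lambda>_. A) \<times> PiE C (\<lambda>_. A)"
        then obtain \<phi> \<psi> where pp: "p = (\<phi>, \<psi>)" "\<phi> \<in> PiE B (\<lambda>_. A)" "\<psi> \<in> PiE C (\<lambda>_. A)"
          by blast
        have e1: "restrict (\<lambda>x. if x \<in> B then \<phi> x else \<psi> x) B = \<phi>"
          using pp(2) by (intro ext) (auto simp: restrict_def PiE_def extensional_def)
        have e2: "restrict (\<lambda>x. if x \<in> B then \<phi> x else \<psi> x) C = \<psi>"
          using pp(3) disj by (intro ext) (auto simp: restrict_def PiE_def extensional_def)
        show ?thesis using e1 e2 pp(1) by simp
      qed
      subgoal for p
      proof -
        assume "p \<in> PiE B (\<lambda>_. A) \<times> PiE C (\<lambda>_. A)"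
        then obtain \<phi> \<psi> where pp: "p = (\<phi>, \<psi>)" "\<phi> \<in> PiE B (\<lambda>_. A)" "\<psi> \<in> PiE C (\<lambda>_. A)"
          by blast
        have "(\<lambda>x. if x \<in> B then \<phi> x else \<psi> x) \<in> PiE (B \<union> C) (\<lambda>_. A)"
          using pp(2,3) unfolding PiE_def extensional_def Pi_def by auto
        then show ?thesis using pp(1) by simp
      qed
      subgoal for \<omega>
        by (rule ext) (auto simp: PiE_def extensional_def restrict_def)
      subgoal for \<omega> by auto
      subgoal for p
      proof -
        assume "p \<in> PiE B (\<lambda>_. A) \<times> PiE C (\<lambda>_. A)"
        then obtain \<phi> \<psi> where pp: "p = (\<phi>, \<psi>)" "\<phi> \<in> PiE B (\<lambda>_. A)" "\<psi> \<in> PiE C (\<lambda>_. A)"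
          by blast
        show ?thesis using pp 3[of \<phi> \<psi>] 4[of \<psi> \<phi>] by simp
      qed
      done
  qed
  finally show ?thesis ..
qed

lemma sum_PiE_Union:
  fixes g :: "'v set \<Rightarrow> ('v \<Rightarrow> 'b) \<Rightarrow> real"
  assumes "finite M" "\<forall>e\<in>M. finite e" "\<forall>e\<in>M. \<forall>f\<in>M. e \<noteq> f \<longrightarrow> e \<inter> f = {}" "finite A"
    and dep: "\<forall>e\<in>M. \<forall>\<omega> \<omega>'. (\<forall>x\<in>e. \<omega> x = \<omega>' x) \<longrightarrow> g e \<omega> = g e \<omega>'"
  shows "(\<Sum>\<omega>\<in>PiE (\<Union>M) (\<lambda>_. A). \<Prod>e\<in>M. g e \<omega>) = (\<Prod>e\<in>M. \<Sum>\<omega>\<in>PiE e (\<lambda>_. A). g e \<omega>)"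
  using assms
proof (induction M rule: finite_induct)
  case empty
  then show ?case by simp
next
  case (insert e M)
  have fe: "finite e" using insert.prems(1) by simp
  have fM: "finite (\<Union>M)" using insert.prems(1) insert.hyps(1) by simp
  have dj: "e \<inter> \<Union>M = {}"
  proof -
    { fix x assume "x \<in> e" "x \<in> \<Union>M"
      then obtain f where "f \<in> M" "x \<in> f" by blast
      moreover have "e \<noteq> f" using \<open>f \<in> M\<close> insert.hyps(2) by blast
      ultimately have False using insert.prems(2) \<open>x \<in> e\<close> by blast }
    then show ?thesis by blast
  qed
  have IH: "(\<Sum>\<omega>\<in>PiE (\<Union>M) (\<lambda>_. A). \<Prod>e\<in>M. g e \<omega>) = (\<Prod>e\<in>M. \<Sum>\<omega>\<in>PiE e (\<lambda>_. A). g e \<omega>)"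
    apply (rule insert.IH)
    using insert.prems by simp_all
  have "(\<Sum>\<omega>\<in>PiE (\<Union>(insert e M)) (\<lambda>_. A). \<Prod>e\<in>insert e M. g e \<omega>)
     = (\<Sum>\<omega>\<in>PiE (e \<union> \<Union>M) (\<lambda>_. A). g e \<omega> * (\<Prod>e\<in>M. g e \<omega>))"
    using insert.hyps by simp
  also have "\<dots> = (\<Sum>\<omega>\<in>PiE e (\<lambda>_. A). g e \<omega>) * (\<Sum>\<omega>\<in>PiE (\<Union>M) (\<lambda>_. A). \<Prod>e\<in>M. g e \<omega>)"
  proof (rule sum_PiE_split[OF fe fM insert.prems(3) dj])
    show "g e \<omega> = g e \<omega>'" if "\<And>x. x \<in> e \<Longrightarrow> \<omega> x = \<omega>' x" for \<omega> \<omega>'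
      using insert.prems(4) that by simp
    show "(\<Prod>e\<in>M. g e \<omega>) = (\<Prod>e\<in>M. g e \<omega>')" if "\<And>x. x \<in> \<Union>M \<Longrightarrow> \<omega> x = \<omega>' x" for \<omega> \<omega>'
    proof (rule prod.cong[OF refl])
      fix f assume "f \<in> M"
      then show "g f \<omega> = g f \<omega>'" using insert.prems(4) that by blast
    qed
  qed
  also have "\<dots> = (\<Prod>e\<in>insert e M. \<Sum>\<omega>\<in>PiE e (\<lambda>_. A). g e \<omega>)"
    using insert.hyps IH by simp
  finally show ?case .
qed


lemma chernoff_count:
  fixes M :: "'a set set" and V :: "'a set" and \<iota> :: "'a \<Rightarrow> 'a set \<Rightarrow> nat"
    and r :: nat and \<delta> a :: real
  assumes mM: "matching M" and sub: "\<Union>M \<subseteq> V" and fV: "finite V" and r: "r \<ge> 1"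
    and \<iota>: "\<forall>e\<in>M. \<forall>v\<in>e. \<iota> v e < r" and \<delta>: "\<delta> \<ge> 0"
  shows "real (card {\<omega>\<in>PiE V (\<lambda>_. {..<r}). real (card {e\<in>M. \<forall>v\<in>e. \<omega> v = \<iota> v e}) < a}) * exp (- \<delta> * a)
       \<le> real r ^ card V * (1 - (1 - exp (- \<delta>)) / real r ^ 2) ^ card M"
proof -
  define A where "A = {..<r}"
  define \<Omega> where "\<Omega> = PiE V (\<lambda>_. A)"
  define S where "S \<omega> = real (card {e\<in>M. \<forall>v\<in>e. \<omega> v = \<iota> v e})" for \<omega> :: "'a \<Rightarrow> nat"
  define G where "G e \<omega> = (if \<forall>v\<in>e. \<omega> v = \<iota> v e then exp (- \<delta>) else 1)" for e and \<omega> :: "'a \<Rightarrow> nat"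
  define bad where "bad = {\<omega>\<in>\<Omega>. S \<omega> < a}"
  have fM: "finite M" and c2: "\<forall>e\<in>M. card e = 2" and dis: "\<forall>e\<in>M. \<forall>f\<in>M. e \<noteq> f \<longrightarrow> e \<inter> f = {}"
    using mM unfolding matching_def is_edge_set_def by auto
  have fe: "\<forall>e\<in>M. finite e" using c2 by (metis card.infinite zero_neq_numeral)
  have fA: "finite A" unfolding A_def by simp
  have fO: "finite \<Omega>" unfolding \<Omega>_def using fV fA by (simp add: finite_PiE)
  have key: "exp (- \<delta> * S \<omega>) = (\<Prod>e\<in>M. G e \<omega>)" for \<omega>
  proof -
    have "card {e\<in>M. \<forall>v\<in>e. \<omega> v = \<iota> v e} = (\<Sum>e\<in>M. if \<forall>v\<in>e. \<omega> v = \<iota> v e then 1 else 0)"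
      using fM by (simp add: sum.inter_filter[symmetric])
    then have "S \<omega> = (\<Sum>e\<in>M. if \<forall>v\<in>e. \<omega> v = \<iota> v e then 1 else 0)"
      unfolding S_def by (simp add: of_nat_sum if_distrib cong: if_cong)
    then have "- \<delta> * S \<omega> = (\<Sum>e\<in>M. - \<delta> * (if \<forall>v\<in>e. \<omega> v = \<iota> v e then 1 else 0))"
      by (simp add: sum_distrib_left)
    then have "exp (- \<delta> * S \<omega>) = (\<Prod>e\<in>M. exp (- \<delta> * (if \<forall>v\<in>e. \<omega> v = \<iota> v e then 1 else 0)))"
      using fM by (simp add: exp_sum)
    also have "\<dots> = (\<Prod>e\<in>M. G e \<omega>)"
      unfolding G_def by (intro prod.cong) auto
    finally show ?thesis .
  qed
  have G01: "0 \<le> G e \<omega> \<and> G e \<omega> \<le> 1" for e \<omega>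
    using \<delta> unfolding G_def by auto
  have markov: "real (card bad) * exp (- \<delta> * a) \<le> (\<Sum>\<omega>\<in>\<Omega>. \<Prod>e\<in>M. G e \<omega>)"
  proof -
    have "real (card bad) * exp (- \<delta> * a) = (\<Sum>\<omega>\<in>bad. exp (- \<delta> * a))" by simp
    also have "\<dots> \<le> (\<Sum>\<omega>\<in>bad. exp (- \<delta> * S \<omega>))"
    proof (rule sum_mono)
      fix \<omega> assume "\<omega> \<in> bad"
      then have "S \<omega> < a" unfolding bad_def by simp
      then show "exp (- \<delta> * a) \<le> exp (- \<delta> * S \<omega>)" using \<delta> by (simp add: mult_left_mono)
    qed
    also have "\<dots> \<le> (\<Sum>\<omega>\<in>\<Omega>. exp (- \<delta> * S \<omega>))"
      by (rule sum_mono2[OF fO]) (auto simp: bad_def)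
    finally show ?thesis by (simp only: key)
  qed
  have VU: "V = \<Union>M \<union> (V - \<Union>M)" using sub by blast
  have fU: "finite (\<Union>M)" using fM fe by simp
  have split: "(\<Sum>\<omega>\<in>\<Omega>. \<Prod>e\<in>M. G e \<omega>)
      = (\<Sum>\<omega>\<in>PiE (\<Union>M) (\<lambda>_. A). \<Prod>e\<in>M. G e \<omega>) * (\<Sum>\<omega>\<in>PiE (V - \<Union>M) (\<lambda>_. A). 1)"
  proof -
    have "(\<Sum>\<omega>\<in>\<Omega>. \<Prod>e\<in>M. G e \<omega>) = (\<Sum>\<omega>\<in>PiE (\<Union>M \<union> (V - \<Union>M)) (\<lambda>_. A). (\<Prod>e\<in>M. G e \<omega>) * 1)"
      unfolding \<Omega>_def using VU by simp
    also have "\<dots> = (\<Sum>\<omega>\<in>PiE (\<Union>M) (\<lambda>_. A). \<Prod>e\<in>M. G e \<omega>) * (\<Sum>\<omega>\<in>PiE (V - \<Union>M) (\<lambda>_. A). 1)"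
    proof (rule sum_PiE_split[where g = "\<lambda>_. 1"])
      show "finite (\<Union>M)" by (rule fU)
      show "finite (V - \<Union>M)" using fV by simp
      show "finite A" by (rule fA)
      show "\<Union>M \<inter> (V - \<Union>M) = {}" by blast
      show "(\<Prod>e\<in>M. G e \<omega>) = (\<Prod>e\<in>M. G e \<omega>')" if "\<And>x. x \<in> \<Union>M \<Longrightarrow> \<omega> x = \<omega>' x" for \<omega> \<omega>'
      proof (rule prod.cong[OF refl])
        fix e assume "e \<in> M"
        then have "\<forall>v\<in>e. \<omega> v = \<omega>' v" using that by blast
        then show "G e \<omega> = G e \<omega>'" unfolding G_def by simp
      qed
    qed simp
    finally show ?thesis .
  qed
  have rest: "(\<Sum>\<omega>\<in>PiE (V - \<Union>M) (\<lambda>_. A). 1::real) = real r ^ card (V - \<Union>M)"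
    using fV by (simp add: card_PiE A_def)
  have union: "(\<Sum>\<omega>\<in>PiE (\<Union>M) (\<lambda>_. A). \<Prod>e\<in>M. G e \<omega>) = (\<Prod>e\<in>M. \<Sum>\<omega>\<in>PiE e (\<lambda>_. A). G e \<omega>)"
    by (rule sum_PiE_Union[OF fM fe dis fA]) (auto simp: G_def)
  have each: "(\<Sum>\<omega>\<in>PiE e (\<lambda>_. A). G e \<omega>) \<le> real r ^ 2 - 1 + exp (- \<delta>)" if e: "e \<in> M" for e
  proof -
    define \<phi>0 where "\<phi>0 = restrict (\<lambda>v. \<iota> v e) e"
    have in0: "\<phi>0 \<in> PiE e (\<lambda>_. A)" using \<iota> e unfolding \<phi>0_def A_def by auto
    have fP: "finite (PiE e (\<lambda>_. A))" using fe e fA by (simp add: finite_PiE)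
    have cP: "card (PiE e (\<lambda>_. A)) = r ^ 2" using fe e c2 by (simp add: card_PiE A_def)
    have "(\<Sum>\<omega>\<in>PiE e (\<lambda>_. A). G e \<omega>) = G e \<phi>0 + (\<Sum>\<omega>\<in>PiE e (\<lambda>_. A) - {\<phi>0}. G e \<omega>)"
      using fP in0 by (simp add: sum.remove)
    also have "G e \<phi>0 = exp (- \<delta>)" unfolding G_def \<phi>0_def by simp
    also have "(\<Sum>\<omega>\<in>PiE e (\<lambda>_. A) - {\<phi>0}. G e \<omega>) \<le> (\<Sum>\<omega>\<in>PiE e (\<lambda>_. A) - {\<phi>0}. 1)"
      using G01 by (intro sum_mono) auto
    also have "\<dots> = real r ^ 2 - 1"
    proof -
      have "r ^ 2 \<ge> 1" using r by simp
      then show ?thesis using fP in0 cP by (simp add: card_Diff_singleton of_nat_diff)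
    qed
    finally show ?thesis by simp
  qed
  define q where "q = 1 - (1 - exp (- \<delta>)) / real r ^ 2"
  have rq: "real r ^ 2 - 1 + exp (- \<delta>) = real r ^ 2 * q" using r unfolding q_def by (simp add: field_simps)
  have prodle: "(\<Prod>e\<in>M. \<Sum>\<omega>\<in>PiE e (\<lambda>_. A). G e \<omega>) \<le> (real r ^ 2 * q) ^ card M"
  proof -
    have "(\<Prod>e\<in>M. \<Sum>\<omega>\<in>PiE e (\<lambda>_. A). G e \<omega>) \<le> (\<Prod>e\<in>M. real r ^ 2 - 1 + exp (- \<delta>))"
      by (intro prod_mono conjI sum_nonneg each) (use G01 in auto)
    then show ?thesis by (simp add: rq)
  qed
  have cU: "card (\<Union>M) = 2 * card M"
  proof -
    have "card (\<Union>M) = sum card M"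
      by (rule card_Union_disjoint) (use fe dis in \<open>auto simp: pairwise_def disjnt_def\<close>)
    also have "\<dots> = sum (\<lambda>_. 2) M" using c2 by (intro sum.cong) auto
    finally show ?thesis by simp
  qed
  have cle: "2 * card M \<le> card V" using cU card_mono[OF fV sub] by simp
  have cD: "card (V - \<Union>M) = card V - 2 * card M"
    using card_Diff_subset[OF fU sub] cU by simp
  have pw: "real r ^ (card V - 2 * card M) * (real r ^ 2) ^ card M = real r ^ card V"
    using cle by (simp add: power_mult[symmetric] power_add[symmetric])
  have "real (card bad) * exp (- \<delta> * a) \<le> (\<Prod>e\<in>M. \<Sum>\<omega>\<in>PiE e (\<lambda>_. A). G e \<omega>) * real r ^ card (V - \<Union>M)"
    using markov split rest union by simp
  also have "\<dots> \<le> (real r ^ 2 * q) ^ card M * real r ^ card (V - \<Union>M)"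
    by (rule mult_right_mono[OF prodle]) simp
  also have "\<dots> = real r ^ card V * q ^ card M"
    using pw cD by (simp add: power_mult_distrib mult.commute)
  finally show ?thesis unfolding bad_def \<Omega>_def A_def S_def q_def .
qed

lemma exp_neg_quad: fixes x :: real assumes "0 \<le> x" shows "exp (- x) \<le> 1 - x + x^2/2"
proof -
  obtain t where t: "exp (-x) = (\<Sum>m<3. ((-x) ^ m) / fact m) + (exp t / fact 3) * (-x) ^ 3"
    using Maclaurin_exp_le[of "-x" 3] by blast
  have s: "(\<Sum>m<3. ((-x) ^ m) / fact m) = 1 - x + x^2/2"
    by (simp add: numeral_3_eq_3 power2_eq_square)
  have "(exp t / fact 3) * (-x) ^ 3 \<le> 0"
    using assms by (intro mult_nonneg_nonpos) (auto simp: power_odd_eq)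
  then show ?thesis using t s by linarith
qed

lemma arith_bound:
  fixes n r k :: nat
  assumes r: "r \<ge> 1" and k: "k \<ge> 1"
    and big: "real n > 2 * (real r ^ 3 + real r)^2 * ln (real k)"
  shows "(1 - (1 - exp (- (1 / (real r ^ 2 + 1)))) / real r ^ 2) ^ n
         < exp (- (1 / (real r ^ 2 + 1)) * (real n / (real r ^ 2 + 1))) / real k"
proof -
  define R where "R = real r ^ 2"
  define \<delta> where "\<delta> = 1 / (R + 1)"
  define x where "x = 1 - exp (- \<delta>)"
  have R1: "R \<ge> 1" unfolding R_def using r by simp
  have d0: "\<delta> > 0" unfolding \<delta>_def using R1 by simp
  have dR: "\<delta> * (R + 1) = 1" unfolding \<delta>_def using R1 by simp
  have x0: "0 \<le> x" "x \<le> 1" unfolding x_def using d0 by auto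
  have xl: "x \<ge> \<delta> - \<delta>^2/2" unfolding x_def using exp_neg_quad[of \<delta>] d0 by simp
  have q0: "0 \<le> 1 - x / R" using x0 R1 by (simp add: field_simps)
  have qe: "1 - x / R \<le> exp (- x / R)" using exp_ge_add_one_self[of "- x / R"] by simp
  have "(1 - x / R) ^ n \<le> exp (- x / R) ^ n" by (rule power_mono[OF qe q0])
  also have "\<dots> = exp (- real n * x / R)" by (simp add: exp_of_nat_mult[symmetric])
  also have "\<dots> \<le> exp (- real n * (\<delta> - \<delta>^2/2) / R)"
    using xl R1 by (simp add: divide_right_mono mult_left_mono)
  also have "- real n * (\<delta> - \<delta>^2/2) / R = - real n * \<delta>^2 - real n * \<delta>^2 / (2 * R)"
  proof -
    have h: "R * \<delta>^2 + \<delta>^2 = \<delta> * (\<delta> * (R + 1))" by (simp add: power2_eq_square algebra_simps)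
    have "\<delta> - \<delta>^2/2 = R * \<delta>^2 + \<delta>^2/2" using h dR by simp
    then have "- real n * (\<delta> - \<delta>^2/2) / R = - real n * (R * \<delta>^2 + \<delta>^2/2) / R" by simp
    also have "\<dots> = - real n * \<delta>^2 - real n * \<delta>^2 / (2 * R)" using R1 by (simp add: field_simps)
    finally show ?thesis .
  qed
  also have "exp (- real n * \<delta>^2 - real n * \<delta>^2 / (2 * R)) < exp (- real n * \<delta>^2 - ln (real k))"
  proof -
    have e: "(real r ^ 3 + real r)^2 = R * (R + 1)^2" unfolding R_def by (simp add: power2_eq_square algebra_simps power3_eq_cube)
    have "real n > 2 * (R * (R+1)^2) * ln (real k)" using big e by simp
    then have "real n / (2 * R * (R+1)^2) > ln (real k)" using R1 by (simp add: field_simps)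
    moreover have "real n * \<delta>^2 / (2 * R) = real n / (2 * R * (R+1)^2)"
      unfolding \<delta>_def using R1 by (simp add: field_simps power2_eq_square)
    ultimately show ?thesis by simp
  qed
  also have "\<dots> = exp (- \<delta> * (real n / (R + 1))) / real k"
    using k dR by (simp add: exp_diff \<delta>_def power2_eq_square field_simps)
  finally show ?thesis unfolding x_def \<delta>_def R_def .
qed

theorem lemma4p2:
  fixes k r :: nat and M :: "nat \<Rightarrow> 'a set set"
  assumes match: "\<And>i. i \<in> {1..k} \<Longrightarrow> matching (M i)"
    and deg: "max_degree_le (\<Union>i\<in>{1..k}. M i) r"
    and big: "\<And>i. i \<in> {1..k} \<Longrightarrow> real (card (M i)) > 2 * (real r ^ 3 + real r)^2 * ln (real k)"
  shows "\<exists>H. matching H \<and> H \<subseteq> (\<Union>i\<in>{1..k}. M i) \<and>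
           (\<forall>i\<in>{1..k}. real (card (H \<inter> M i)) \<ge> real (card (M i)) / (real r ^ 2 + 1))"
proof -
  define E where "E = (\<Union>i\<in>{1..k}. M i)"
  show ?thesis
  proof (cases "E = {}")
    case True
    have "matching ({} :: 'a set set)" unfolding matching_def is_edge_set_def by simp
    moreover have "\<forall>i\<in>{1..k}. card (M i) = 0" using True unfolding E_def by auto
    ultimately show ?thesis by (intro exI[of _ "{}"]) auto
  next
    case False
    have fE: "finite E" unfolding E_def using match unfolding matching_def by auto
    have c2: "\<forall>e\<in>E. card e = 2" unfolding E_def using match unfolding matching_def is_edge_set_def by auto
    have fe: "\<forall>e\<in>E. finite e" using c2 by (metis card.infinite zero_neq_numeral)
    define V where "V = \<Union>E"
    have fV: "finite V" unfolding V_def using fE fe by simp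
    define Ev where "Ev v = {e\<in>E. v \<in> e}" for v
    have fEv: "finite (Ev v)" for v unfolding Ev_def using fE by simp
    have cEv: "card (Ev v) \<le> r" for v
      using deg unfolding max_degree_le_def degree_def Ev_def E_def by blast
    obtain e0 where e0: "e0 \<in> E" using False by blast
    then have "e0 \<noteq> {}" using c2 by fastforce
    then obtain v0 where v0: "v0 \<in> e0" by blast
    have "card (Ev v0) \<ge> 1" using e0 v0 fEv[of v0] unfolding Ev_def
      by (metis (mono_tags, lifting) One_nat_def Suc_leI card_gt_0_iff empty_iff mem_Collect_eq)
    then have r1: "r \<ge> 1" using cEv[of v0] by simp
    have k1: "k \<ge> 1" using False unfolding E_def by (cases k) auto
    have "\<forall>v. \<exists>h. inj_on h (Ev v) \<and> h ` Ev v \<subseteq> {..<r}"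
    proof
      fix v
      obtain h where h: "bij_betw h (Ev v) {0..<card (Ev v)}"
        using ex_bij_betw_finite_nat[OF fEv[of v]] by blast
      then have "inj_on h (Ev v)" "h ` Ev v \<subseteq> {..<r}"
        using cEv[of v] by (auto simp: bij_betw_def)
      then show "\<exists>h. inj_on h (Ev v) \<and> h ` Ev v \<subseteq> {..<r}" by blast
    qed
    then obtain \<iota> where \<iota>: "\<And>v. inj_on (\<iota> v) (Ev v) \<and> \<iota> v ` Ev v \<subseteq> {..<r}"
      by metis
    define \<Omega> where "\<Omega> = PiE V (\<lambda>_. {..<r::nat})"
    define Hs where "Hs \<omega> = {e\<in>E. \<forall>v\<in>e. \<omega> v = \<iota> v e}" for \<omega> :: "'a \<Rightarrow> nat"
    have Hmatch: "matching (Hs \<omega>)" for \<omega>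
    proof -
      have "finite (Hs \<omega>)" using fE unfolding Hs_def by simp
      moreover have "is_edge_set (Hs \<omega>)" using c2 unfolding Hs_def is_edge_set_def by auto
      moreover have "e \<inter> f = {}" if ef: "e \<in> Hs \<omega>" "f \<in> Hs \<omega>" "e \<noteq> f" for e f
      proof (rule ccontr)
        assume "e \<inter> f \<noteq> {}"
        then obtain v where v: "v \<in> e" "v \<in> f" by blast
        have "e \<in> Ev v" "f \<in> Ev v" using ef v unfolding Hs_def Ev_def by auto
        moreover have "\<iota> v e = \<iota> v f" using ef v unfolding Hs_def by auto
        ultimately have "e = f" using \<iota>[of v] by (auto dest: inj_onD)
        then show False using ef by simp
      qed
      ultimately show ?thesis unfolding matching_def by blast
    qed
    define bad where "bad i = {\<omega>\<in>\<Omega>. real (card {e\<in>M i. \<forall>v\<in>e. \<omega> v = \<iota> v e}) < real (card (M i)) / (real r ^ 2 + 1)}" for i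
    have cO: "card \<Omega> = r ^ card V" unfolding \<Omega>_def using fV by (simp add: card_PiE)
    have fO: "finite \<Omega>" unfolding \<Omega>_def using fV by (simp add: finite_PiE)
    have badle: "real (card (bad i)) < real (card \<Omega>) / real k" if i: "i \<in> {1..k}" for i
    proof -
      define n where "n = card (M i)"
      define \<delta> where "\<delta> = 1 / (real r ^ 2 + 1)"
      define a where "a = real n / (real r ^ 2 + 1)"
      have d0: "\<delta> \<ge> 0" unfolding \<delta>_def by simp
      have MiE: "M i \<subseteq> E" using i unfolding E_def by blast
      have ch: "real (card (bad i)) * exp (- \<delta> * a)
          \<le> real r ^ card V * (1 - (1 - exp (- \<delta>)) / real r ^ 2) ^ card (M i)"
        unfolding bad_def \<Omega>_def a_def n_def
      proof (rule chernoff_count)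
        show "matching (M i)" using match i by simp
        show "\<Union>(M i) \<subseteq> V" using MiE unfolding V_def by blast
        show "finite V" by (rule fV)
        show "1 \<le> r" by (rule r1)
        show "\<forall>e\<in>M i. \<forall>v\<in>e. \<iota> v e < r"
        proof (intro ballI)
          fix e v assume "e \<in> M i" "v \<in> e"
          then have "e \<in> Ev v" using MiE unfolding Ev_def by blast
          then show "\<iota> v e < r" using \<iota>[of v] by blast
        qed
        show "0 \<le> \<delta>" by (rule d0)
      qed
      have ab: "(1 - (1 - exp (- \<delta>)) / real r ^ 2) ^ n < exp (- \<delta> * a) / real k"
        unfolding \<delta>_def a_def n_def by (rule arith_bound[OF r1 k1 big[OF i]])
      have rp: "real r ^ card V > 0" using r1 by simp
      have "real (card (bad i)) * exp (- \<delta> * a) < real r ^ card V * (exp (- \<delta> * a) / real k)"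
        using ch mult_strict_left_mono[OF ab rp] unfolding n_def by linarith
      also have "real r ^ card V * (exp (- \<delta> * a) / real k) = (real r ^ card V / real k) * exp (- \<delta> * a)"
        by simp
      finally have "real (card (bad i)) < real r ^ card V / real k"
        by (rule mult_right_less_imp_less) simp
      then show ?thesis using cO by simp
    qed
    have "real (card (\<Union>i\<in>{1..k}. bad i)) \<le> (\<Sum>i\<in>{1..k}. real (card (bad i)))"
      using card_UN_le[of "{1..k}" bad] by (simp flip: of_nat_sum)
    also have "\<dots> < (\<Sum>i\<in>{1..k}. real (card \<Omega>) / real k)"
      using k1 badle by (intro sum_strict_mono) auto
    also have "\<dots> = real (card \<Omega>)" using k1 by simp
    finally have "card (\<Union>i\<in>{1..k}. bad i) < card \<Omega>" by simp
    then have lt: "card (\<Union>i\<in>{1..k}. bad i) < card \<Omega>" .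
    have fB: "finite (\<Union>i\<in>{1..k}. bad i)"
      by (rule finite_subset[OF _ fO]) (auto simp: bad_def)
    have "\<not> \<Omega> \<subseteq> (\<Union>i\<in>{1..k}. bad i)"
    proof
      assume "\<Omega> \<subseteq> (\<Union>i\<in>{1..k}. bad i)"
      then have "card \<Omega> \<le> card (\<Union>i\<in>{1..k}. bad i)" by (rule card_mono[OF fB])
      with lt show False by simp
    qed
    then obtain \<omega> where w: "\<omega> \<in> \<Omega>" "\<forall>i\<in>{1..k}. \<omega> \<notin> bad i" by blast
    show ?thesis
    proof (intro exI[of _ "Hs \<omega>"] conjI ballI)
      show "matching (Hs \<omega>)" by (rule Hmatch)
      show "Hs \<omega> \<subseteq> (\<Union>i\<in>{1..k}. M i)" unfolding Hs_def E_def by blast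
      fix i assume i: "i \<in> {1..k}"
      have MiE: "M i \<subseteq> E" using i unfolding E_def by blast
      have "Hs \<omega> \<inter> M i = {e\<in>M i. \<forall>v\<in>e. \<omega> v = \<iota> v e}" using MiE unfolding Hs_def by blast
      moreover have "\<omega> \<notin> bad i" using w i by blast
      ultimately show "real (card (M i)) / (real r ^ 2 + 1) \<le> real (card (Hs \<omega> \<inter> M i))"
        using w(1) unfolding bad_def by (simp add: not_less)
    qed
  qed
qed

end
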